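(* Let $\mathcal{G}=(V,E_1,\dots,E_\tau)$ be a temporal graph with $E_1=E_2=\dots=E_\tau=:E$, and let $k\in\mathbb{N}_0$ with $\tau\ge k$. Then $(\mathcal{G},k,0)$ is a yes-instance of MinTimeline$_\infty$ (equivalently, of MinTimeline$_+$) if and only if the graph $G=(V,E)$ admits a $(\tau{:}\tau-k)$-coloring.
   Context: A temporal graph $\mathcal{G}=(V,(E_i)_{i\in[\tau]})$ consists of a finite vertex set $V$ and edge sets $E_1,\dots,E_\tau\subseteq\binom{V}{2}$. A $k$-activity timeline is a set $\mathcal{T}\subseteq\{(v,a,b)\in V\times[\tau]\times[\tau]\mid a\le b\}$ with at most $k$ triples $(v,\cdot,\cdot)$ for each $v\in V$; it covers $\mathcal{G}$ if for every $t\in[\tau]$ and $\{u,v\}\in E_t$ there is $(u,a,b)\in\mathcal{T}$ or $(v,a,b)\in\mathcal{T}$ with $a\le t\le b$. MinTimeline$_\infty$: given $(\mathcal{G},k,\ell)$, decide whether there is a $k$-activity timeline covering $\mathcal{G}$ with $\max_{(v,a,b)\in\mathcal{T}}(b-a)\le\ell$; MinTimeline$_+$: same with $\sum_{(v,a,b)\in\mathcal{T}}(b-a)\le\ell$. For a graph $G=(V,E)$ and integers $a\ge b\ge 0$, an $(a{:}b)$-coloring of $G$ is a function $c\colon V\to\binom{[a]}{b}$ (assigning each vertex a $b$-element subset of $[a]$) with $c(u)\cap c(v)=\emptyset$ for all $\{u,v\}\in E$. *)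

theory Defs
  imports Main
begin

definition temporal_graph :: "'v set \<Rightarrow> (nat \<Rightarrow> 'v set set) \<Rightarrow> nat \<Rightarrow> bool" where
  "temporal_graph V Es \<tau> \<longleftrightarrow> finite V \<and>
     (\<forall>t\<in>{1..\<tau>}. \<forall>e\<in>Es t. e \<subseteq> V \<and> card e = 2)"

definition activity_timeline ::
  "'v set \<Rightarrow> nat \<Rightarrow> nat \<Rightarrow> ('v \<times> nat \<times> nat) set \<Rightarrow> bool" where
  "activity_timeline V \<tau> k T \<longleftrightarrow>
     T \<subseteq> {(v, a, b). v \<in> V \<and> a \<in> {1..\<tau>} \<and> b \<in> {1..\<tau>} \<and> a \<le> b} \<and>
     (\<forall>v\<in>V. card {(a, b). (v, a, b) \<in> T} \<le> k)"

definition covers ::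
  "('v \<times> nat \<times> nat) set \<Rightarrow> (nat \<Rightarrow> 'v set set) \<Rightarrow> nat \<Rightarrow> bool" where
  "covers T Es \<tau> \<longleftrightarrow>
     (\<forall>t\<in>{1..\<tau>}. \<forall>u v. {u, v} \<in> Es t \<longrightarrow>
        (\<exists>a b. ((u, a, b) \<in> T \<or> (v, a, b) \<in> T) \<and> a \<le> t \<and> t \<le> b))"

definition MinTimeline_inf :: "'v set \<Rightarrow> (nat \<Rightarrow> 'v set set) \<Rightarrow> nat \<Rightarrow> nat \<Rightarrow> nat \<Rightarrow> bool" where
  "MinTimeline_inf V Es \<tau> k l \<longleftrightarrow>
     (\<exists>T. activity_timeline V \<tau> k T \<and> covers T Es \<tau> \<and>
          (\<forall>(v, a, b)\<in>T. b - a \<le> l))"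

definition MinTimeline_plus :: "'v set \<Rightarrow> (nat \<Rightarrow> 'v set set) \<Rightarrow> nat \<Rightarrow> nat \<Rightarrow> nat \<Rightarrow> bool" where
  "MinTimeline_plus V Es \<tau> k l \<longleftrightarrow>
     (\<exists>T. activity_timeline V \<tau> k T \<and> covers T Es \<tau> \<and>
          (\<Sum>(v, a, b)\<in>T. b - a) \<le> l)"

definition ab_coloring :: "'v set \<Rightarrow> 'v set set \<Rightarrow> nat \<Rightarrow> nat \<Rightarrow> ('v \<Rightarrow> nat set) \<Rightarrow> bool" where
  "ab_coloring V E a b c \<longleftrightarrow>
     (\<forall>v\<in>V. c v \<subseteq> {1..a} \<and> card (c v) = b) \<and>
     (\<forall>u v. {u, v} \<in> E \<longrightarrow> c u \<inter> c v = {})"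

definition has_ab_coloring :: "'v set \<Rightarrow> 'v set set \<Rightarrow> nat \<Rightarrow> nat \<Rightarrow> bool" where
  "has_ab_coloring V E a b \<longleftrightarrow> (\<exists>c. ab_coloring V E a b c)"

end

theory Submission
  imports Defs
begin

lemma card_act:
  assumes "T \<subseteq> {(v, a, b). v \<in> V \<and> a \<in> {1..\<tau>} \<and> b \<in> {1..\<tau>} \<and> a \<le> b}"
    and "\<forall>(v, a, b)\<in>T. b - a \<le> (0::nat)"
  shows "{(a, b). (v, a, b) \<in> T} = (\<lambda>t. (t,t)) ` {t\<in>{1..\<tau>}. (v,t,t) \<in> T}"
proof -
  have "\<And>a b. (v,a,b) \<in> T \<Longrightarrow> a = b \<and> a \<in> {1..\<tau>}" using assms by fastforce
  then show ?thesis by (auto simp: image_def)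
qed

lemma inf_iff_col:
  assumes tg: "temporal_graph V Es \<tau>"
    and E: "\<forall>t\<in>{1..\<tau>}. Es t = E"
    and k: "\<tau> \<ge> k"
  shows "MinTimeline_inf V Es \<tau> k 0 \<longleftrightarrow> has_ab_coloring V E \<tau> (\<tau> - k)"
proof
  assume "MinTimeline_inf V Es \<tau> k 0"
  then obtain T where at: "activity_timeline V \<tau> k T" and cv: "covers T Es \<tau>"
     and z: "\<forall>(v, a, b)\<in>T. b - a \<le> (0::nat)" unfolding MinTimeline_inf_def by blast
  have sub: "T \<subseteq> {(v, a, b). v \<in> V \<and> a \<in> {1..\<tau>} \<and> b \<in> {1..\<tau>} \<and> a \<le> b}"
    using at unfolding activity_timeline_def by blast
  define A where "A v = {t\<in>{1..\<tau>}. (v,t,t) \<in> T}" for v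
  have cA: "card (A v) \<le> k" if "v \<in> V" for v
  proof -
    have "card {(a, b). (v, a, b) \<in> T} \<le> k" using at that unfolding activity_timeline_def by blast
    moreover have "card {(a, b). (v, a, b) \<in> T} = card (A v)"
      unfolding card_act[OF sub z] A_def by (rule card_image) (auto simp: inj_on_def)
    ultimately show ?thesis by simp
  qed
  have cI: "card ({1..\<tau>} - A v) \<ge> \<tau> - k" if "v \<in> V" for v
  proof -
    have "card ({1..\<tau>} - A v) = \<tau> - card (A v)"
      by (subst card_Diff_subset) (auto simp: A_def)
    then show ?thesis using cA[OF that] by simp
  qed
  define c where "c v = (if v \<in> V then (SOME S. S \<subseteq> {1..\<tau>} - A v \<and> card S = \<tau> - k) else {})" for v
  have cp: "c v \<subseteq> {1..\<tau>} - A v \<and> card (c v) = \<tau> - k" if "v \<in> V" for v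
  proof -
    note vV = that
    have "\<exists>S. S \<subseteq> {1..\<tau>} - A v \<and> card S = \<tau> - k"
      using cI[OF vV] by (meson obtain_subset_with_card_n)
    then have "(SOME S. S \<subseteq> {1..\<tau>} - A v \<and> card S = \<tau> - k) \<subseteq> {1..\<tau>} - A v \<and>
      card (SOME S. S \<subseteq> {1..\<tau>} - A v \<and> card S = \<tau> - k) = \<tau> - k" by (rule someI_ex)
    then show ?thesis unfolding c_def using vV by simp
  qed
  have "ab_coloring V E \<tau> (\<tau> - k) c"
    unfolding ab_coloring_def
  proof (intro conjI allI impI ballI)
    fix v assume "v \<in> V" then show "c v \<subseteq> {1..\<tau>}" "card (c v) = \<tau> - k" using cp by auto
  next
    fix u v assume uv: "{u, v} \<in> E"
    show "c u \<inter> c v = {}"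
    proof (cases "\<tau> = 0")
      case True
      then show ?thesis using cp unfolding c_def by auto
    next
      case False
      then have "Es 1 = E" using E by auto
      then have "{u,v} \<subseteq> V" using tg uv False unfolding temporal_graph_def
        by (metis One_nat_def atLeastAtMost_iff le_numeral_extra(4) less_one not_less)
      then have "u \<in> V" "v \<in> V" by auto
      show ?thesis
      proof (rule ccontr)
        assume "c u \<inter> c v \<noteq> {}"
        then obtain t where t: "t \<in> c u" "t \<in> c v" by blast
        then have tr: "t \<in> {1..\<tau>}" "t \<notin> A u" "t \<notin> A v" using cp[OF \<open>u\<in>V\<close>] cp[OF \<open>v\<in>V\<close>] by blast+
        then have "{u,v} \<in> Es t" using E uv by auto
        then obtain a b where ab: "(u, a, b) \<in> T \<or> (v, a, b) \<in> T" "a \<le> t" "t \<le> b"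
          using cv tr unfolding covers_def by blast
        then have "a = b" using z by auto
        then show False using ab tr unfolding A_def by auto
      qed
    qed
  qed
  then show "has_ab_coloring V E \<tau> (\<tau> - k)" unfolding has_ab_coloring_def by blast
next
  assume "has_ab_coloring V E \<tau> (\<tau> - k)"
  then obtain c where c: "ab_coloring V E \<tau> (\<tau> - k) c" unfolding has_ab_coloring_def by blast
  define T where "T = {(v,t,t) | v t. v \<in> V \<and> t \<in> {1..\<tau>} \<and> t \<notin> c v}"
  have sub: "T \<subseteq> {(v, a, b). v \<in> V \<and> a \<in> {1..\<tau>} \<and> b \<in> {1..\<tau>} \<and> a \<le> b}"
    unfolding T_def by auto
  have z: "\<forall>(v, a, b)\<in>T. b - a \<le> (0::nat)" unfolding T_def by auto
  have "card {(a, b). (v, a, b) \<in> T} \<le> k" if "v \<in> V" for v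
  proof -
    have cs: "c v \<subseteq> {1..\<tau>}" "card (c v) = \<tau> - k" using c that unfolding ab_coloring_def by auto
    have "{t\<in>{1..\<tau>}. (v,t,t) \<in> T} = {1..\<tau>} - c v" unfolding T_def using that by auto
    moreover have "card ({1..\<tau>} - c v) = k" using cs k
      by (subst card_Diff_subset) (auto intro: finite_subset)
    moreover have "card {(a, b). (v, a, b) \<in> T} = card {t\<in>{1..\<tau>}. (v,t,t) \<in> T}"
      unfolding card_act[OF sub z] by (rule card_image) (auto simp: inj_on_def)
    ultimately show ?thesis by simp
  qed
  then have at: "activity_timeline V \<tau> k T" using sub unfolding activity_timeline_def by blast
  have "covers T Es \<tau>" unfolding covers_def
  proof (intro ballI allI impI)
    fix t u v assume t: "t \<in> {1..\<tau>}" and uv: "{u, v} \<in> Es t"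
    then have uvE: "{u,v} \<in> E" using E by auto
    have "{u,v} \<subseteq> V" using tg t uv unfolding temporal_graph_def by blast
    then have "u \<in> V" "v \<in> V" by auto
    have "c u \<inter> c v = {}" using c uvE unfolding ab_coloring_def by blast
    then have "t \<notin> c u \<or> t \<notin> c v" by blast
    then have "(u,t,t) \<in> T \<or> (v,t,t) \<in> T" unfolding T_def using t \<open>u\<in>V\<close> \<open>v\<in>V\<close> by auto
    then show "\<exists>a b. ((u, a, b) \<in> T \<or> (v, a, b) \<in> T) \<and> a \<le> t \<and> t \<le> b" by blast
  qed
  then show "MinTimeline_inf V Es \<tau> k 0" unfolding MinTimeline_inf_def using at z by blast
qed

lemma inf_iff_plus:
  assumes tg: "temporal_graph V Es \<tau>"
  shows "MinTimeline_plus V Es \<tau> k 0 \<longleftrightarrow> MinTimeline_inf V Es \<tau> k 0"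
proof -
  have fV: "finite V" using tg unfolding temporal_graph_def by blast
  have fin: "finite T" if "activity_timeline V \<tau> k T" for T
  proof (rule finite_subset)
    show "T \<subseteq> V \<times> {1..\<tau>} \<times> {1..\<tau>}" using that unfolding activity_timeline_def by auto
    show "finite (V \<times> {1..\<tau>} \<times> {1..\<tau>})" using fV by simp
  qed
  have eq: "(\<Sum>(v, a, b)\<in>T. b - a) \<le> (0::nat) \<longleftrightarrow> (\<forall>(v, a, b)\<in>T. b - a \<le> (0::nat))"
    if "finite T" for T :: "('v \<times> nat \<times> nat) set"
    using that by (auto simp: case_prod_beta)
  show ?thesis unfolding MinTimeline_plus_def MinTimeline_inf_def using fin eq by metis
qed

theorem mainTheorem2:
  fixes V :: "'v set" and Es :: "nat \<Rightarrow> 'v set set" and E :: "'v set set"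
    and \<tau> k :: nat
  assumes "temporal_graph V Es \<tau>"
    and "\<forall>t\<in>{1..\<tau>}. Es t = E"
    and "\<tau> \<ge> k"
  shows "(MinTimeline_inf V Es \<tau> k 0 \<longleftrightarrow> has_ab_coloring V E \<tau> (\<tau> - k)) \<and>
         (MinTimeline_plus V Es \<tau> k 0 \<longleftrightarrow> has_ab_coloring V E \<tau> (\<tau> - k))"
  using inf_iff_col[OF assms] inf_iff_plus[OF assms(1)] by blast

end
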